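(* Let $\phi\ge1$. Consider a knapsack instance with arbitrary profits $p_1,\ldots,p_n\in\mathbb{R}_{\ge0}$ in which each weight $w_i$ is chosen uniformly at random from an arbitrary interval $A_i\subseteq[0,1]$ of length $1/\phi$, independently of the other weights, and let $\mathcal{P}$ be the set of Pareto-optimal solutions. For $k\in\mathbb{N}$ and $i\in\{0,\ldots,k-1\}$ let $I_i^k=(ni/k,\,n(i+1)/k]$, call $I_i^k$ non-empty if there is $x\in\mathcal{P}$ with $w^{\mathsf T}x\in I_i^k$, and let $X^k$ be the number of non-empty intervals $I_i^k$ plus one. Then for every $k\in\mathbb{N}$, $\mathbb{E}[X^k]\le n^2\phi+1$.
   Context: Solutions are vectors $x\in\{0,1\}^n$. A solution $y$ dominates $x$ if $p^{\mathsf T}y\ge p^{\mathsf T}x$ and $w^{\mathsf T}y\le w^{\mathsf T}x$ with at least one inequality strict; $x$ is Pareto-optimal if no solution dominates it. *)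

theory Defs
  imports "HOL-Probability.Probability"
begin

text \<open>A solution x in {0,1}^n is encoded by its support S, a subset of {..<n};
  then p^T x = sum p S and w^T x = sum w S.\<close>

definition dominates :: "(nat \<Rightarrow> real) \<Rightarrow> (nat \<Rightarrow> real) \<Rightarrow> nat set \<Rightarrow> nat set \<Rightarrow> bool" where
  "dominates p w T S \<longleftrightarrow>
     sum p T \<ge> sum p S \<and> sum w T \<le> sum w S \<and> (sum p T > sum p S \<or> sum w T < sum w S)"

definition pareto_optimal :: "nat \<Rightarrow> (nat \<Rightarrow> real) \<Rightarrow> (nat \<Rightarrow> real) \<Rightarrow> nat set \<Rightarrow> bool" where
  "pareto_optimal n p w S \<longleftrightarrow>
     S \<subseteq> {..<n} \<and> \<not> (\<exists>T. T \<subseteq> {..<n} \<and> dominates p w T S)"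

definition pareto_set :: "nat \<Rightarrow> (nat \<Rightarrow> real) \<Rightarrow> (nat \<Rightarrow> real) \<Rightarrow> nat set set" where
  "pareto_set n p w = {S. pareto_optimal n p w S}"

definition Ik :: "nat \<Rightarrow> nat \<Rightarrow> nat \<Rightarrow> real set" where
  "Ik n k i = {real n * real i / real k <.. real n * (real i + 1) / real k}"

definition Xk :: "nat \<Rightarrow> (nat \<Rightarrow> real) \<Rightarrow> nat \<Rightarrow> (nat \<Rightarrow> real) \<Rightarrow> nat" where
  "Xk n p k w = card {i. i < k \<and> (\<exists>S \<in> pareto_set n p w. sum w S \<in> Ik n k i)} + 1"

definition weight_space :: "nat \<Rightarrow> (nat \<Rightarrow> real) \<Rightarrow> real \<Rightarrow> (nat \<Rightarrow> real) measure" where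
  "weight_space n a \<phi> = PiM {..<n} (\<lambda>i. uniform_measure lborel {a i .. a i + 1 / \<phi>})"

end

theory Submission
  imports Defs
begin


definition beats :: "nat \<Rightarrow> (nat \<Rightarrow> real) \<Rightarrow> real \<Rightarrow> nat \<Rightarrow> (nat \<Rightarrow> real) \<Rightarrow> nat set \<Rightarrow> bool" where
  "beats n p t j w T \<longleftrightarrow> (\<forall>T'\<in>Pow {..<n}. j \<notin> T' \<and> sum w T' \<le> t \<longrightarrow> sum p T' < sum p T)"

definition Ev :: "nat \<Rightarrow> (nat \<Rightarrow> real) \<Rightarrow> real \<Rightarrow> real \<Rightarrow> nat \<Rightarrow> (nat \<Rightarrow> real) \<Rightarrow> bool" where
  "Ev n p t e j w \<longleftrightarrow>
    (\<exists>T\<in>Pow {..<n}. j \<in> T \<and> beats n p t j w T \<and> sum w T \<le> t + e \<and>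
       (\<forall>T''\<in>Pow {..<n}. j \<in> T'' \<and> beats n p t j w T'' \<longrightarrow> sum w T'' > t)) \<or> w j < 0"

lemma key_pointwise:
  assumes t: "t \<ge> 0" and S: "S \<in> pareto_set n p w" and ws: "sum w S \<in> {t<..t+e}"
  shows "\<exists>j<n. Ev n p t e j w"
proof (cases "\<exists>j<n. w j < 0")
  case True thus ?thesis unfolding Ev_def by blast
next
  case False
  hence nn: "\<And>j. j < n \<Longrightarrow> w j \<ge> 0" by force
  have Sn: "S \<subseteq> {..<n}" and nd: "\<And>T. T \<subseteq> {..<n} \<Longrightarrow> \<not> dominates p w T S"
    using S unfolding pareto_set_def pareto_optimal_def by auto
  let ?F = "{T. T \<subseteq> {..<n} \<and> sum w T \<le> t}"
  have finF: "finite ?F" by (rule finite_subset[of _ "Pow {..<n}"]) auto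
  have neF: "{} \<in> ?F" using t by auto
  have "Max (sum p ` ?F) \<in> sum p ` ?F" using finF neF by (intro Max_in) auto
  then obtain L where L: "L \<in> ?F" and LM: "sum p L = Max (sum p ` ?F)" by auto
  have Lmax: "\<And>T. T \<in> ?F \<Longrightarrow> sum p T \<le> sum p L"
    unfolding LM using finF by (intro Max_ge) auto
  have pSL: "sum p S > sum p L"
  proof (rule ccontr)
    assume "\<not> ?thesis"
    hence "dominates p w L S" using L ws unfolding dominates_def by auto
    thus False using nd L by auto
  qed
  have "\<not> S \<subseteq> L"
  proof
    assume "S \<subseteq> L"
    hence "sum w S \<le> sum w L"
      using L nn by (intro sum_mono2) (auto intro: finite_subset)
    thus False using L ws by auto
  qed
  then obtain j where j: "j \<in> S" "j \<notin> L" by blast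
  have jn: "j < n" using j Sn by auto
  have bS: "beats n p t j w S" unfolding beats_def
    using Lmax pSL by (auto intro: le_less_trans)
  have "Ev n p t e j w" unfolding Ev_def
  proof (intro disjI1 bexI[of _ S] conjI ballI impI)
    show "sum w S \<le> t + e" using ws by auto
    fix T'' assume T'': "T'' \<in> Pow {..<n}" "j \<in> T'' \<and> beats n p t j w T''"
    show "sum w T'' > t"
    proof (rule ccontr)
      assume "\<not> ?thesis"
      hence "sum p T'' \<le> sum p L" using Lmax T'' by auto
      moreover have "sum p L < sum p T''" using T'' L j unfolding beats_def by auto
      ultimately show False by auto
    qed
  qed (use Sn j bS in auto)
  thus ?thesis using jn by blast
qed

lemma sum_upd_notin: "j \<notin> T \<Longrightarrow> sum (x(j:=y)) T = sum x T"
  by (intro sum.cong) auto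

lemma sum_upd_in: "finite T \<Longrightarrow> j \<in> T \<Longrightarrow> sum (x(j:=y)) T = y + sum x (T - {j})"
  by (simp add: sum.remove sum_upd_notin)

lemma beats_upd: "beats n p t j (x(j:=y)) T = beats n p t j x T"
  unfolding beats_def by (auto simp del: fun_upd_apply simp add: sum_upd_notin)

lemma slice:
  "\<exists>c. \<forall>y. Ev n p t e j (x(j:=y)) \<longrightarrow> y \<in> {c<..c+e} \<or> y < 0"
proof -
  let ?C = "{T\<in>Pow {..<n}. j \<in> T \<and> beats n p t j x T}"
  have finC: "finite ?C" by (rule finite_subset[of _ "Pow {..<n}"]) auto
  show ?thesis
  proof (cases "?C = {}")
    case True
    show ?thesis
      by (rule exI[of _ 0]) (use True in \<open>auto simp: Ev_def beats_upd\<close>)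
  next
    case False
    define m where "m = Min ((\<lambda>T. sum x (T - {j})) ` ?C)"
    have "m \<in> (\<lambda>T. sum x (T - {j})) ` ?C"
      unfolding m_def using finC False by (intro Min_in) auto
    then obtain T0 where T0: "T0 \<in> ?C" "sum x (T0 - {j}) = m" by auto
    have mle: "\<And>T. T \<in> ?C \<Longrightarrow> m \<le> sum x (T - {j})"
      unfolding m_def using finC by (intro Min_le) auto
    show ?thesis
    proof (rule exI[of _ "t - m"], intro allI impI)
      fix y assume E: "Ev n p t e j (x(j:=y))"
      show "y \<in> {t - m<..t - m + e} \<or> y < 0"
      proof (cases "y < 0")
        case False
        with E obtain T where T: "T \<in> Pow {..<n}" "j \<in> T" "beats n p t j x T"
          "sum (x(j:=y)) T \<le> t + e"
          and all: "\<forall>T''\<in>Pow {..<n}. j \<in> T'' \<and> beats n p t j x T'' \<longrightarrow> sum (x(j:=y)) T'' > t"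
          unfolding Ev_def beats_upd by auto
        have fT: "finite T" using T(1) by (auto intro: finite_subset)
        have fT0: "finite T0" using T0(1) by (auto intro: finite_subset)
        have "y + sum x (T - {j}) \<le> t + e" using T(4) sum_upd_in[OF fT T(2), of x y] by simp
        moreover have "m \<le> sum x (T - {j})" using mle T by auto
        moreover have "y + m > t" using all T0 sum_upd_in[OF fT0, of j x y] by auto
        ultimately show ?thesis by auto
      qed simp
    qed
  qed
qed



lemma probM:
  fixes c \<phi> :: real
  assumes "\<phi> > 0" shows "prob_space (uniform_measure lborel {c .. c + 1 / \<phi>})"
proof -
  have p: "1 / \<phi> > 0" using assms by simp
  hence "c \<le> c + 1 / \<phi>" by linarith
  thus ?thesis using p by (intro prob_space_uniform_measure) (auto simp: emeasure_lborel_Icc)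
qed

lemma comp_meas:
  fixes a :: "nat \<Rightarrow> real" and \<phi> :: real
  assumes "i \<in> I"
  shows "(\<lambda>w. w i) \<in> borel_measurable (PiM I (\<lambda>i. uniform_measure lborel {a i .. a i + 1 / \<phi>}))"
proof -
  have "(\<lambda>w. w i) \<in> measurable (PiM I (\<lambda>i. uniform_measure lborel {a i .. a i + 1 / \<phi>}))
          (uniform_measure lborel {a i .. a i + 1 / \<phi>})"
    using assms by (rule measurable_component_singleton)
  thus ?thesis by (simp add: measurable_cong_sets[OF refl sets_uniform_measure])
qed

lemma sum_meas:
  fixes a :: "nat \<Rightarrow> real" and \<phi> :: real
  assumes "T \<subseteq> I"
  shows "(\<lambda>w. sum w T) \<in> borel_measurable (PiM I (\<lambda>i. uniform_measure lborel {a i .. a i + 1 / \<phi>}))"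
  using assms by (intro borel_measurable_sum comp_meas) auto

lemma pred_le_sum:
  fixes a :: "nat \<Rightarrow> real" and \<phi> c :: real
  assumes "T \<subseteq> I"
  shows "Measurable.pred (PiM I (\<lambda>i. uniform_measure lborel {a i .. a i + 1 / \<phi>})) (\<lambda>w. sum w T \<le> c)"
proof -
  have "(\<lambda>w. sum w T) -` {..c} \<inter> space (PiM I (\<lambda>i. uniform_measure lborel {a i .. a i + 1 / \<phi>}))
     \<in> sets (PiM I (\<lambda>i. uniform_measure lborel {a i .. a i + 1 / \<phi>}))"
    by (rule measurable_sets[OF sum_meas[OF assms]]) simp
  thus ?thesis unfolding pred_def by (simp add: vimage_def Int_def conj_commute)
qed

lemma pred_gr_sum:
  fixes a :: "nat \<Rightarrow> real" and \<phi> c :: real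
  assumes "T \<subseteq> I"
  shows "Measurable.pred (PiM I (\<lambda>i. uniform_measure lborel {a i .. a i + 1 / \<phi>})) (\<lambda>w. c < sum w T)"
proof -
  have "(\<lambda>w. sum w T) -` {c<..} \<inter> space (PiM I (\<lambda>i. uniform_measure lborel {a i .. a i + 1 / \<phi>}))
     \<in> sets (PiM I (\<lambda>i. uniform_measure lborel {a i .. a i + 1 / \<phi>}))"
    by (rule measurable_sets[OF sum_meas[OF assms]]) simp
  thus ?thesis unfolding pred_def by (simp add: vimage_def Int_def conj_commute)
qed

lemma pred_neg:
  fixes a :: "nat \<Rightarrow> real" and \<phi> :: real
  assumes "j \<in> I"
  shows "Measurable.pred (PiM I (\<lambda>i. uniform_measure lborel {a i .. a i + 1 / \<phi>})) (\<lambda>w. w j < 0)"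
proof -
  have "(\<lambda>w. w j) -` {..<0} \<inter> space (PiM I (\<lambda>i. uniform_measure lborel {a i .. a i + 1 / \<phi>}))
     \<in> sets (PiM I (\<lambda>i. uniform_measure lborel {a i .. a i + 1 / \<phi>}))"
    by (rule measurable_sets[OF comp_meas[OF assms]]) simp
  thus ?thesis unfolding pred_def by (simp add: vimage_def Int_def conj_commute)
qed

lemma Ev_meas:
  fixes a :: "nat \<Rightarrow> real" and \<phi> :: real
  assumes "j < n"
  shows "Measurable.pred (PiM {..<n} (\<lambda>i. uniform_measure lborel {a i .. a i + 1 / \<phi>})) (Ev n p t e j)"
  unfolding Ev_def beats_def
  by (auto intro!: pred_intros_finite(3,4) pred_intros_logic(2-6) measurable_const
      pred_le_sum pred_gr_sum pred_neg assms)



lemma unif_bound: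
  fixes c e a \<phi> :: real
  assumes "\<phi> > 0" "e \<ge> 0"
  shows "emeasure (uniform_measure lborel {a .. a + 1 / \<phi>}) {c<..c+e} \<le> ennreal (\<phi> * e)"
proof -
  have p: "1 / \<phi> > 0" using assms by simp
  have "emeasure (uniform_measure lborel {a .. a + 1 / \<phi>}) {c<..c+e}
      = emeasure lborel ({a .. a + 1 / \<phi>} \<inter> {c<..c+e}) / emeasure lborel {a .. a + 1 / \<phi>}"
    by simp
  also have "\<dots> \<le> emeasure lborel {c<..c+e} / emeasure lborel {a .. a + 1 / \<phi>}"
    by (intro divide_right_mono_ennreal emeasure_mono) auto
  also have "\<dots> = ennreal e / ennreal (1 / \<phi>)"
    using assms p by simp
  also have "\<dots> = ennreal (\<phi> * e)"
    using assms p by (simp add: divide_ennreal)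
  finally show ?thesis .
qed

lemma unif_neg:
  fixes a \<phi> :: real
  assumes "\<phi> > 0" "a \<ge> 0"
  shows "emeasure (uniform_measure lborel {a .. a + 1 / \<phi>}) {..<0} = 0"
proof -
  have "{a .. a + 1 / \<phi>} \<inter> {..<0} = {}" using assms by auto
  thus ?thesis by simp
qed

lemma Ev_int:
  fixes a :: "nat \<Rightarrow> real" and \<phi> e t :: real
  assumes phi: "\<phi> > 0" and e: "e \<ge> 0" and j: "j < n" and aj: "a j \<ge> 0"
  shows "(\<integral>\<^sup>+w. (if Ev n p t e j w then 1 else 0) \<partial>weight_space n a \<phi>) \<le> ennreal (\<phi> * e)"
proof -
  define M where "M = (\<lambda>i. uniform_measure lborel {a i .. a i + 1 / \<phi>})"
  have pM: "\<And>i. prob_space (M i)" unfolding M_def using phi by (rule probM)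
  interpret PSF: product_sigma_finite M
    unfolding product_sigma_finite_def using pM prob_space_imp_sigma_finite by blast
  have I: "{..<n} = insert j ({..<n} - {j})" using j by auto
  note [measurable] = Ev_meas[OF j]
  have meas: "(\<lambda>w. if Ev n p t e j w then 1 else 0 :: ennreal) \<in> borel_measurable (PiM {..<n} M)"
    unfolding M_def by measurable
  have "(\<integral>\<^sup>+w. (if Ev n p t e j w then 1 else 0) \<partial>weight_space n a \<phi>)
     = (\<integral>\<^sup>+w. (if Ev n p t e j w then 1 else 0) \<partial>PiM (insert j ({..<n} - {j})) M)"
    unfolding weight_space_def M_def using I by simp
  also have "\<dots> = (\<integral>\<^sup>+x. (\<integral>\<^sup>+y. (if Ev n p t e j (x(j:=y)) then 1 else 0) \<partial>M j) \<partial>PiM ({..<n} - {j}) M)"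
    by (rule PSF.product_nn_integral_insert) (use meas I in auto)
  also have "\<dots> \<le> (\<integral>\<^sup>+x. ennreal (\<phi> * e) \<partial>PiM ({..<n} - {j}) M)"
  proof (rule nn_integral_mono)
    fix x :: "nat \<Rightarrow> real"
    obtain c where c: "\<And>y. Ev n p t e j (x(j:=y)) \<Longrightarrow> y \<in> {c<..c+e} \<or> y < 0"
      using slice[of n p t e j x] by blast
    have "(\<integral>\<^sup>+y. (if Ev n p t e j (x(j:=y)) then 1 else 0) \<partial>M j)
        \<le> (\<integral>\<^sup>+y. indicator {c<..c+e} y + indicator {..<0} y \<partial>M j)"
      by (intro nn_integral_mono) (auto dest: c split: split_indicator)
    also have "\<dots> = emeasure (M j) {c<..c+e} + emeasure (M j) {..<0}"
      by (subst nn_integral_add) (auto simp: M_def)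
    also have "\<dots> \<le> ennreal (\<phi> * e) + 0"
      unfolding M_def using unif_bound[OF phi e] unif_neg[OF phi aj] by (intro add_mono) auto
    finally show "(\<integral>\<^sup>+y. (if Ev n p t e j (x(j:=y)) then 1 else 0) \<partial>M j) \<le> ennreal (\<phi> * e)"
      by simp
  qed
  also have "\<dots> = ennreal (\<phi> * e)"
  proof -
    interpret PP: prob_space "PiM ({..<n} - {j}) M" by (rule prob_space_PiM) (rule pM)
    show ?thesis by (simp add: PP.emeasure_space_1)
  qed
  finally show ?thesis .
qed



theorem lemma2p5:
  fixes n k :: nat and \<phi> :: real and p a :: "nat \<Rightarrow> real"
  assumes "\<phi> \<ge> 1"
    and "\<And>i. i < n \<Longrightarrow> p i \<ge> 0"
    and "\<And>i. i < n \<Longrightarrow> 0 \<le> a i \<and> a i + 1 / \<phi> \<le> 1"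
  shows "(\<integral>\<^sup>+ w. ennreal (real (Xk n p k w)) \<partial>(weight_space n a \<phi>))
           \<le> ennreal (real n ^ 2 * \<phi> + 1)"
proof -
  have phi: "\<phi> > 0" using assms(1) by simp
  define e where "e = real n / real k"
  define t where "t = (\<lambda>i::nat. real n * real i / real k)"
  have e0: "e \<ge> 0" unfolding e_def by simp
  have t0: "\<And>i. t i \<ge> 0" unfolding t_def by simp
  have Ik_eq: "\<And>i. Ik n k i = {t i <.. t i + e}"
    unfolding Ik_def t_def e_def by (simp add: distrib_left add_divide_distrib)
  define F where "F = (\<lambda>i j w. if Ev n p (t i) e j w then 1 else 0 :: ennreal)"
  have pw: "ennreal (real (Xk n p k w)) \<le> 1 + (\<Sum>i<k. \<Sum>j<n. F i j w)" for w
  proof -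
    define A where "A = {i. i < k \<and> (\<exists>S \<in> pareto_set n p w. sum w S \<in> Ik n k i)}"
    have Ak: "A \<subseteq> {..<k}" unfolding A_def by auto
    have "ennreal (real (Xk n p k w)) = of_nat (card A) + 1"
      unfolding Xk_def A_def by (simp add: ennreal_of_nat_eq_real_of_nat)
    also have "of_nat (card A) = (\<Sum>i\<in>A. (1::ennreal))" by simp
    also have "\<dots> \<le> (\<Sum>i\<in>A. \<Sum>j<n. F i j w)"
    proof (rule sum_mono)
      fix i assume "i \<in> A"
      then obtain S where S: "S \<in> pareto_set n p w" "sum w S \<in> {t i <.. t i + e}"
        unfolding A_def Ik_eq by auto
      obtain j where j: "j < n" "Ev n p (t i) e j w" using key_pointwise[OF t0 S] by blast
      have "F i j w = 1" unfolding F_def using j by simp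
      moreover have "F i j w \<le> (\<Sum>j<n. F i j w)"
        by (rule member_le_sum) (use j in auto)
      ultimately show "1 \<le> (\<Sum>j<n. F i j w)" by simp
    qed
    also have "\<dots> \<le> (\<Sum>i<k. \<Sum>j<n. F i j w)"
      by (rule sum_mono2) (use Ak in auto)
    finally show ?thesis by (simp add: add.commute add_right_mono)
  qed
  define M where "M = (\<lambda>i. uniform_measure lborel {a i .. a i + 1 / \<phi>})"
  have WS: "weight_space n a \<phi> = PiM {..<n} M" unfolding weight_space_def M_def ..
  interpret PP: prob_space "weight_space n a \<phi>"
    unfolding WS by (rule prob_space_PiM) (unfold M_def, rule probM[OF phi])
  have measF: "\<And>i j. j < n \<Longrightarrow> F i j \<in> borel_measurable (weight_space n a \<phi>)"
  proof -
    fix i j assume j: "j < n"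
    note [measurable] = Ev_meas[OF j]
    show "F i j \<in> borel_measurable (weight_space n a \<phi>)"
      unfolding F_def weight_space_def by measurable
  qed
  have "(\<integral>\<^sup>+ w. ennreal (real (Xk n p k w)) \<partial>(weight_space n a \<phi>))
      \<le> (\<integral>\<^sup>+ w. 1 + (\<Sum>i<k. \<Sum>j<n. F i j w) \<partial>(weight_space n a \<phi>))"
    by (rule nn_integral_mono) (rule pw)
  also have "\<dots> = 1 + (\<Sum>i<k. \<Sum>j<n. (\<integral>\<^sup>+ w. F i j w \<partial>(weight_space n a \<phi>)))"
  proof -
    have "(\<integral>\<^sup>+ w. 1 + (\<Sum>i<k. \<Sum>j<n. F i j w) \<partial>(weight_space n a \<phi>))
       = 1 + (\<Sum>i<k. (\<integral>\<^sup>+ w. (\<Sum>j<n. F i j w) \<partial>(weight_space n a \<phi>)))"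
      using measF
      by (simp add: nn_integral_add nn_integral_sum borel_measurable_sum PP.emeasure_space_1)
    also have "\<dots> = 1 + (\<Sum>i<k. \<Sum>j<n. (\<integral>\<^sup>+ w. F i j w \<partial>(weight_space n a \<phi>)))"
      using measF by (intro arg_cong2[where f="(+)"] refl sum.cong nn_integral_sum) auto
    finally show ?thesis .
  qed
  also have "\<dots> \<le> 1 + (\<Sum>i<k. \<Sum>j<n. ennreal (\<phi> * e))"
    unfolding F_def
    by (intro add_left_mono sum_mono Ev_int[OF phi e0]) (use assms(3) in auto)
  also have "\<dots> = ennreal (1 + real k * (real n * (\<phi> * e)))"
  proof -
    have "ennreal (1 + real k * (real n * (\<phi> * e)))
        = 1 + ennreal (real k) * (ennreal (real n) * ennreal (\<phi> * e))"
      using phi e0 by (simp add: ennreal_plus ennreal_mult)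
    thus ?thesis by (simp add: ennreal_of_nat_eq_real_of_nat)
  qed
  also have "\<dots> \<le> ennreal (real n ^ 2 * \<phi> + 1)"
  proof (cases "k = 0")
    case True thus ?thesis using phi by simp
  next
    case False
    hence "real k * (real n * (\<phi> * e)) = real n ^ 2 * \<phi>"
      unfolding e_def by (simp add: power2_eq_square)
    hence "1 + real k * (real n * (\<phi> * e)) = real n ^ 2 * \<phi> + 1" by simp
    thus ?thesis by (simp only:)
  qed
  finally show ?thesis .
qed

end
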